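(* Let $L$ be an IL-algebra in which every element is idempotent (i.e. $x\ast x=x$ for all $x\in L$), and let $F$ be a filter of $L$. Then $F$ is an implicative filter.
   Context: An IL-algebra is a structure $(L,\cup,\cap,\bot,\to,\ast,1)$ such that $(L,\cup,\cap,\bot)$ is a lattice with least element $\bot$, $(L,\ast,1)$ is a commutative monoid with unit $1$, and for all $x,y,z\in L$: $x\ast y\leq z$ iff $x\leq y\to z$. A filter of $L$ is a non-empty $F\subseteq L$ with $1\in F$, such that $x,y\in F$ implies $x\ast y\in F$ and $x\cap y\in F$, and $x\in F$, $x\leq y$ implies $y\in F$. An implicative filter of $L$ is a non-empty $F\subseteq L$ such that $1\in F$ and, for all $x,y,z\in L$, if $x\to(y\to z)\in F$ and $x\to y\in F$ then $x\to z\in F$. *)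

theory Defs
  imports Main
begin

definition il_le :: "('a \<Rightarrow> 'a \<Rightarrow> 'a) \<Rightarrow> 'a \<Rightarrow> 'a \<Rightarrow> bool" where
  "il_le meet x y \<longleftrightarrow> meet x y = x"

definition IL_algebra ::
  "'a set \<Rightarrow> ('a \<Rightarrow> 'a \<Rightarrow> 'a) \<Rightarrow> ('a \<Rightarrow> 'a \<Rightarrow> 'a) \<Rightarrow> 'a \<Rightarrow>
   ('a \<Rightarrow> 'a \<Rightarrow> 'a) \<Rightarrow> ('a \<Rightarrow> 'a \<Rightarrow> 'a) \<Rightarrow> 'a \<Rightarrow> bool" where
  "IL_algebra L join meet bt imp mul e \<longleftrightarrow>
     \<comment> \<open>closure\<close>
     (\<forall>x\<in>L. \<forall>y\<in>L. join x y \<in> L \<and> meet x y \<in> L \<and> imp x y \<in> L \<and> mul x y \<in> L)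
     \<and> bt \<in> L \<and> e \<in> L
     \<comment> \<open>lattice axioms\<close>
     \<and> (\<forall>x\<in>L. \<forall>y\<in>L. join x y = join y x \<and> meet x y = meet y x)
     \<and> (\<forall>x\<in>L. \<forall>y\<in>L. \<forall>z\<in>L. join (join x y) z = join x (join y z)
                            \<and> meet (meet x y) z = meet x (meet y z))
     \<and> (\<forall>x\<in>L. \<forall>y\<in>L. join x (meet x y) = x \<and> meet x (join x y) = x)
     \<comment> \<open>least element\<close>
     \<and> (\<forall>x\<in>L. il_le meet bt x)
     \<comment> \<open>commutative monoid\<close>
     \<and> (\<forall>x\<in>L. \<forall>y\<in>L. mul x y = mul y x)
     \<and> (\<forall>x\<in>L. \<forall>y\<in>L. \<forall>z\<in>L. mul (mul x y) z = mul x (mul y z))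
     \<and> (\<forall>x\<in>L. mul x e = x)
     \<comment> \<open>residuation\<close>
     \<and> (\<forall>x\<in>L. \<forall>y\<in>L. \<forall>z\<in>L. il_le meet (mul x y) z \<longleftrightarrow> il_le meet x (imp y z))"

definition IL_filter ::
  "'a set \<Rightarrow> ('a \<Rightarrow> 'a \<Rightarrow> 'a) \<Rightarrow> ('a \<Rightarrow> 'a \<Rightarrow> 'a) \<Rightarrow> 'a \<Rightarrow> 'a set \<Rightarrow> bool" where
  "IL_filter L meet mul e F \<longleftrightarrow>
     F \<noteq> {} \<and> F \<subseteq> L \<and> e \<in> F
     \<and> (\<forall>x\<in>F. \<forall>y\<in>F. mul x y \<in> F \<and> meet x y \<in> F)
     \<and> (\<forall>x\<in>F. \<forall>y\<in>L. il_le meet x y \<longrightarrow> y \<in> F)"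

definition IL_implicative_filter ::
  "'a set \<Rightarrow> ('a \<Rightarrow> 'a \<Rightarrow> 'a) \<Rightarrow> 'a \<Rightarrow> 'a set \<Rightarrow> bool" where
  "IL_implicative_filter L imp e F \<longleftrightarrow>
     F \<noteq> {} \<and> F \<subseteq> L \<and> e \<in> F
     \<and> (\<forall>x\<in>L. \<forall>y\<in>L. \<forall>z\<in>L.
          imp x (imp y z) \<in> F \<and> imp x y \<in> F \<longrightarrow> imp x z \<in> F)"

end

theory Submission
  imports Defs
begin

theorem mainTheorem10:
  assumes "IL_algebra L join meet bt imp mul e"
    and "\<forall>x\<in>L. mul x x = x"
    and "IL_filter L meet mul e F"
  shows "IL_implicative_filter L imp e F"
proof -
  note A = assms(1)[unfolded IL_algebra_def]
  have cl: "\<And>x y. x \<in> L \<Longrightarrow> y \<in> L \<Longrightarrow> join x y \<in> L \<and> meet x y \<in> L \<and> imp x y \<in> L \<and> mul x y \<in> L"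
    using A by blast
  have mc: "\<And>x y. x \<in> L \<Longrightarrow> y \<in> L \<Longrightarrow> meet x y = meet y x" using A by blast
  have ma: "\<And>x y z. x \<in> L \<Longrightarrow> y \<in> L \<Longrightarrow> z \<in> L \<Longrightarrow> meet (meet x y) z = meet x (meet y z)" using A by blast
  have ab1: "\<And>x y. x \<in> L \<Longrightarrow> y \<in> L \<Longrightarrow> join x (meet x y) = x" using A by blast
  have ab2: "\<And>x y. x \<in> L \<Longrightarrow> y \<in> L \<Longrightarrow> meet x (join x y) = x" using A by blast
  have uc: "\<And>x y. x \<in> L \<Longrightarrow> y \<in> L \<Longrightarrow> mul x y = mul y x" using A by blast
  have ua: "\<And>x y z. x \<in> L \<Longrightarrow> y \<in> L \<Longrightarrow> z \<in> L \<Longrightarrow> mul (mul x y) z = mul x (mul y z)" using A by blast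
  have res: "\<And>x y z. x \<in> L \<Longrightarrow> y \<in> L \<Longrightarrow> z \<in> L \<Longrightarrow> il_le meet (mul x y) z \<longleftrightarrow> il_le meet x (imp y z)" using A by blast
  have idm: "\<And>x. x \<in> L \<Longrightarrow> mul x x = x" using assms(2) by blast
  note Fd = assms(3)[unfolded IL_filter_def]
  have FL: "F \<subseteq> L" and eF: "e \<in> F" and Fm: "\<And>x y. x \<in> F \<Longrightarrow> y \<in> F \<Longrightarrow> mul x y \<in> F"
    and Fu: "\<And>x y. x \<in> F \<Longrightarrow> y \<in> L \<Longrightarrow> il_le meet x y \<Longrightarrow> y \<in> F" using Fd by blast+
  have refl: "\<And>x. x \<in> L \<Longrightarrow> il_le meet x x"
  proof -
    fix x assume x: "x \<in> L"
    have "join x (meet x x) = x" using ab1 x by blast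
    hence "meet x x = meet x (join x (meet x x))" by simp
    also have "\<dots> = x" using ab2[OF x] cl[OF x x] by blast
    finally show "il_le meet x x" unfolding il_le_def .
  qed
  have trans: "\<And>x y z. x \<in> L \<Longrightarrow> y \<in> L \<Longrightarrow> z \<in> L \<Longrightarrow> il_le meet x y \<Longrightarrow> il_le meet y z \<Longrightarrow> il_le meet x z"
    unfolding il_le_def proof -
    fix x y z assume h: "x \<in> L" "y \<in> L" "z \<in> L" "meet x y = x" "meet y z = y"
    have "meet x z = meet (meet x y) z" using h by simp
    also have "\<dots> = meet x (meet y z)" using ma[OF h(1-3)] .
    also have "\<dots> = x" using h by simp
    finally show "meet x z = x" .
  qed
  have ev: "\<And>y z. y \<in> L \<Longrightarrow> z \<in> L \<Longrightarrow> il_le meet (mul (imp y z) y) z"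
  proof -
    fix y z assume h: "y \<in> L" "z \<in> L"
    have i: "imp y z \<in> L" using cl h by auto
    show "il_le meet (mul (imp y z) y) z" using res[OF i h] refl[OF i] by simp
  qed
  have mono: "\<And>u v w. u \<in> L \<Longrightarrow> v \<in> L \<Longrightarrow> w \<in> L \<Longrightarrow> il_le meet u v \<Longrightarrow> il_le meet (mul u w) (mul v w)"
  proof -
    fix u v w assume h: "u \<in> L" "v \<in> L" "w \<in> L" "il_le meet u v"
    have vw: "mul v w \<in> L" "imp w (mul v w) \<in> L" using cl h by auto
    have "il_le meet v (imp w (mul v w))" using res[OF h(2) h(3) vw(1)] refl[OF vw(1)] by simp
    hence "il_le meet u (imp w (mul v w))" using trans[OF h(1) h(2) vw(2) h(4)] by simp
    thus "il_le meet (mul u w) (mul v w)" using res[OF h(1) h(3) vw(1)] by simp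
  qed
  have mono2: "\<And>u v u' v'. u \<in> L \<Longrightarrow> v \<in> L \<Longrightarrow> u' \<in> L \<Longrightarrow> v' \<in> L \<Longrightarrow> il_le meet u u' \<Longrightarrow> il_le meet v v' \<Longrightarrow> il_le meet (mul u v) (mul u' v')"
  proof -
    fix u v u' v' assume h: "u \<in> L" "v \<in> L" "u' \<in> L" "v' \<in> L" "il_le meet u u'" "il_le meet v v'"
    have "il_le meet (mul u v) (mul u' v)" using mono[OF h(1) h(3) h(2) h(5)] by simp
    moreover have "il_le meet (mul v u') (mul v' u')" using mono[OF h(2) h(4) h(3) h(6)] by simp
    hence "il_le meet (mul u' v) (mul u' v')" using uc[OF h(2) h(3)] uc[OF h(4) h(3)] by simp
    moreover have "mul u v \<in> L" "mul u' v \<in> L" "mul u' v' \<in> L" using cl h by auto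
    ultimately show "il_le meet (mul u v) (mul u' v')" using trans by blast
  qed
  show ?thesis unfolding IL_implicative_filter_def
  proof (intro conjI ballI impI)
    show "F \<noteq> {}" "F \<subseteq> L" "e \<in> F" using Fd by blast+
  next
    fix x y z assume xyz: "x \<in> L" "y \<in> L" "z \<in> L" and h: "imp x (imp y z) \<in> F \<and> imp x y \<in> F"
    define a where "a = imp x (imp y z)"
    define b where "b = imp x y"
    have aF: "a \<in> F" and bF: "b \<in> F" using h a_def b_def by auto
    have aL: "a \<in> L" and bL: "b \<in> L" using aF bF FL by auto
    have yz: "imp y z \<in> L" using cl xyz by blast
    have ax: "il_le meet (mul a x) (imp y z)" using res[OF aL xyz(1) yz] refl[OF aL] a_def by simp
    have bx: "il_le meet (mul b x) y" using res[OF bL xyz(1) xyz(2)] refl[OF bL] b_def by simp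
    have axL: "mul a x \<in> L" and bxL: "mul b x \<in> L" using cl aL bL xyz by auto
    have 1: "il_le meet (mul (mul a x) (mul b x)) z"
      using trans[OF _ _ xyz(3) mono2[OF axL bxL yz xyz(2) ax bx] ev[OF xyz(2,3)]] cl axL bxL yz xyz by simp
    have e1: "mul (mul a x) (mul b x) = mul a (mul x (mul b x))" using ua[OF aL xyz(1) bxL] .
    have e2: "mul x (mul b x) = mul (mul x b) x" using ua[OF xyz(1) bL xyz(1)] by simp
    have e3: "mul x b = mul b x" using uc[OF xyz(1) bL] .
    have e4: "mul (mul b x) x = mul b (mul x x)" using ua[OF bL xyz(1) xyz(1)] .
    have e5: "mul a (mul b x) = mul (mul a b) x" using ua[OF aL bL xyz(1)] by simp
    have "mul (mul a x) (mul b x) = mul (mul a b) x"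
      using e1 e2 e3 e4 e5 idm[OF xyz(1)] by simp
    with 1 have "il_le meet (mul (mul a b) x) z" by simp
    hence "il_le meet (mul a b) (imp x z)" using res[OF _ xyz(1) xyz(3)] cl aL bL by simp
    moreover have "mul a b \<in> F" using Fm aF bF by blast
    ultimately show "imp x z \<in> F" using Fu cl xyz by simp
  qed
qed

end
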